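(* Let $\mathcal M=\langle M,<,+,\dots\rangle$ be a linear o-minimal expansion of an ordered group. Let $a<b$, $c<d$ in $M$ and let $h:[a,b]\times[c,d]\to M$ be an $\mathcal L$-definable continuous function such that for every $t\in(a,b)$, the map $h(t,-):[c,d]\to M$ is strictly increasing. Then $h(b,d)-h(b,c)>0$.
   Context: $\mathcal L$-definable means definable in $\mathcal M$ with parameters. A function $f:B\subseteq M^n\to M$ is affine if $f(x+t)-f(x)=f(y+t)-f(y)$ whenever $x,y,x+t,y+t\in B$; $\mathcal M$ is linear if every definable $f:B\subseteq M^n\to M$ is affine on each piece of some finite partition of $B$ into definable sets. *)

theory Defs
  imports "HOL-Analysis.Analysis"
begin

text \<open>A first-order structure on the carrier 'a is represented, following van den Dries,
by the family S of its definable (with parameters) sets: S n is a collection of subsets of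
M^n, where M^n is represented as the lists of length n.\<close>

definition tuples :: "nat \<Rightarrow> 'a list set" where
  "tuples n = {xs. length xs = n}"

definition o_minimal_expansion_of_ordered_group ::
  "(nat \<Rightarrow> ('a::{linordered_ab_group_add, linorder_topology}) list set set) \<Rightarrow> bool" where
  "o_minimal_expansion_of_ordered_group S \<longleftrightarrow>
     \<comment> \<open>each S n is a Boolean algebra of subsets of M^n\<close>
     (\<forall>n. \<forall>A\<in>S n. A \<subseteq> tuples n) \<and>
     (\<forall>n. tuples n \<in> S n) \<and>
     (\<forall>n. \<forall>A\<in>S n. tuples n - A \<in> S n) \<and>
     (\<forall>n. \<forall>A\<in>S n. \<forall>B\<in>S n. A \<union> B \<in> S n) \<and>
     \<comment> \<open>cylinders\<close>
     (\<forall>n. \<forall>A\<in>S n. {x # xs | x xs. xs \<in> A} \<in> S (Suc n)) \<and>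
     (\<forall>n. \<forall>A\<in>S n. {xs @ [x] | x xs. xs \<in> A} \<in> S (Suc n)) \<and>
     \<comment> \<open>diagonals\<close>
     (\<forall>n i j. i < n \<longrightarrow> j < n \<longrightarrow> {xs \<in> tuples n. xs ! i = xs ! j} \<in> S n) \<and>
     \<comment> \<open>projections (onto the first n coordinates)\<close>
     (\<forall>n. \<forall>A\<in>S (Suc n). butlast ` A \<in> S n) \<and>
     \<comment> \<open>parameters: every point is definable\<close>
     (\<forall>x. {[x]} \<in> S 1) \<and>
     \<comment> \<open>the language contains < and +\<close>
     {[x, y] | x y. x < y} \<in> S 2 \<and>
     {[x, y, x + y] | x y. True} \<in> S 3 \<and>
     \<comment> \<open>the underlying order is dense\<close>
     (\<forall>x y::'a. x < y \<longrightarrow> (\<exists>z. x < z \<and> z < y)) \<and>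
     \<comment> \<open>o-minimality: definable subsets of M are finite unions of points and open intervals\<close>
     (\<forall>A\<in>S 1. \<exists>F. finite F \<and> {x. [x] \<in> A} = \<Union>F \<and>
        (\<forall>I\<in>F. (\<exists>p. I = {p}) \<or> (\<exists>p q. I = {p<..<q}) \<or> (\<exists>p. I = {p<..}) \<or>
                 (\<exists>q. I = {..<q}) \<or> I = UNIV))"

definition vadd :: "'a::plus list \<Rightarrow> 'a list \<Rightarrow> 'a list" where
  "vadd xs ys = map2 (+) xs ys"

definition affine_on :: "'a::ab_group_add list set \<Rightarrow> ('a list \<Rightarrow> 'a) \<Rightarrow> bool" where
  "affine_on B f \<longleftrightarrow>
     (\<forall>x y t. x \<in> B \<longrightarrow> y \<in> B \<longrightarrow> length t = length x \<longrightarrow>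
        vadd x t \<in> B \<longrightarrow> vadd y t \<in> B \<longrightarrow>
        f (vadd x t) - f x = f (vadd y t) - f y)"

definition definable_fun ::
  "(nat \<Rightarrow> 'a list set set) \<Rightarrow> nat \<Rightarrow> 'a list set \<Rightarrow> ('a list \<Rightarrow> 'a) \<Rightarrow> bool" where
  "definable_fun S n B f \<longleftrightarrow> B \<in> S n \<and> {xs @ [f xs] | xs. xs \<in> B} \<in> S (Suc n)"

definition linear_structure :: "(nat \<Rightarrow> 'a::ab_group_add list set set) \<Rightarrow> bool" where
  "linear_structure S \<longleftrightarrow>
     (\<forall>n B f. definable_fun S n B f \<longrightarrow>
        (\<exists>P. finite P \<and> P \<subseteq> S n \<and> \<Union>P = B \<and> disjoint P \<and> (\<forall>C\<in>P. affine_on C f)))"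

end

theory Submission imports Defs begin

lemma limit_le:
  fixes f g :: "'a::{linordered_ab_group_add, linorder_topology} \<Rightarrow> 'a"
  assumes dense: "\<forall>x y::'a. x < y \<longrightarrow> (\<exists>z. x < z \<and> z < y)"
    and cf: "continuous_on {a..b} f" and cg: "continuous_on {a..b} g"
    and ab: "a \<le> e" "e < b"
    and le: "\<forall>t\<in>{e<..<b}. f t + \<delta> \<le> g t"
  shows "f b + \<delta> \<le> g b"
proof (rule ccontr)
  assume "\<not> f b + \<delta> \<le> g b"
  hence "g b - \<delta> < f b" by (simp add: algebra_simps not_le)
  then obtain m where m1: "g b - \<delta> < m" and m2: "m < f b" using dense by blast
  have bin: "b \<in> {a..b}" using ab by auto
  have "g b \<in> {..<m + \<delta>}" using m1 by (simp add: algebra_simps)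
  then obtain A1 where A1: "open A1" "b \<in> A1" "\<forall>y\<in>{a..b}. y \<in> A1 \<longrightarrow> g y \<in> {..<m+\<delta>}"
    using cg bin unfolding continuous_on_topological by (meson open_lessThan)
  have "f b \<in> {m<..}" using m2 by simp
  then obtain A2 where A2: "open A2" "b \<in> A2" "\<forall>y\<in>{a..b}. y \<in> A2 \<longrightarrow> f y \<in> {m<..}"
    using cf bin unfolding continuous_on_topological by (meson open_greaterThan)
  obtain l1 where l1: "l1 < b" "{l1<..b} \<subseteq> A1" using open_left[OF A1(1,2) ab(2)] by blast
  obtain l2 where l2: "l2 < b" "{l2<..b} \<subseteq> A2" using open_left[OF A2(1,2) ab(2)] by blast
  have "max (max l1 l2) e < b" using l1 l2 ab by auto
  then obtain z where z: "max (max l1 l2) e < z" "z < b" using dense by blast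
  have za: "z \<in> {a..b}" using z ab by auto
  have "g z < m + \<delta>" using A1(3) za l1 z by auto
  moreover have "m < f z" using A2(3) za l2 z by auto
  moreover have "f z + \<delta> \<le> g z" using le z by auto
  ultimately show False
    by (metis add_strict_right_mono less_le_not_le order.strict_trans1 order.strict_trans)
qed

definition convex_ord :: "'a::linorder set \<Rightarrow> bool" where
  "convex_ord I \<longleftrightarrow> (\<forall>x y z. x \<in> I \<longrightarrow> z \<in> I \<longrightarrow> x \<le> y \<longrightarrow> y \<le> z \<longrightarrow> y \<in> I)"

lemma convex_left_nbhd:
  fixes I :: "'a::linorder set"
  assumes "convex_ord I" "a < b" "\<not> (\<exists>e<b. {e<..<b} \<subseteq> I)"
  shows "\<exists>e<b. I \<inter> {e<..<b} = {}"
proof (rule ccontr)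
  assume H: "\<not> (\<exists>e<b. I \<inter> {e<..<b} = {})"
  have ne: "I \<inter> {e<..<b} \<noteq> {}" if "e < b" for e using H that by blast
  obtain p where p: "p \<in> I" "a < p" "p < b" using ne[OF assms(2)] by auto
  have "{p<..<b} \<subseteq> I"
  proof
    fix q assume q: "q \<in> {p<..<b}"
    hence "q < b" by simp
    then obtain r where r: "r \<in> I" "q < r" "r < b" using ne[of q] by auto
    have "p \<le> q" "q \<le> r" using q r by auto
    then show "q \<in> I" using assms(1) p(1) r(1) unfolding convex_ord_def by blast
  qed
  thus False using assms(3) p by blast
qed

lemma cover_left:
  fixes G :: "'a::linorder set set"
  assumes dense: "\<forall>x y::'a. x < y \<longrightarrow> (\<exists>z. x < z \<and> z < y)"
    and fin: "finite G" and cv: "\<forall>I\<in>G. convex_ord I" and ab: "a < b"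
    and cov: "{a<..<b} \<subseteq> \<Union>G"
  shows "\<exists>I\<in>G. \<exists>e<b. {e<..<b} \<subseteq> I"
proof (rule ccontr)
  assume H: "\<not> ?thesis"
  have "\<exists>e<b. I \<inter> {e<..<b} = {}" if I: "I \<in> G" for I
  proof (rule convex_left_nbhd)
    show "convex_ord I" using cv I by blast
    show "a < b" by (rule ab)
    show "\<not> (\<exists>e<b. {e<..<b} \<subseteq> I)" using H I by blast
  qed
  hence "\<forall>I\<in>G. \<exists>e. e < b \<and> I \<inter> {e<..<b} = {}" by blast
  from bchoice[OF this] obtain E where E: "\<forall>I\<in>G. E I < b \<and> I \<inter> {E I<..<b} = {}" by (elim exE)
  define M where "M = Max (insert a (E ` G))"
  have finM: "finite (insert a (E ` G))" using fin by simp
  have "\<forall>x\<in>insert a (E ` G). x < b" using E ab by blast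
  hence Mb: "M < b" unfolding M_def using Max_in[OF finM] by blast
  then obtain z where z: "M < z" "z < b" using dense by blast
  have aM: "a \<le> M" unfolding M_def by (rule Max_ge[OF finM]) simp
  have "z \<in> {a<..<b}" using aM z by simp
  then obtain I where I: "I \<in> G" "z \<in> I" using cov by blast
  have "E I \<le> M" unfolding M_def by (rule Max_ge[OF finM]) (simp add: I(1))
  hence "z \<in> {E I<..<b}" using z by simp
  thus False using E I by blast
qed

lemma infinite_Icc_dense:
  fixes c d :: "'a::linorder"
  assumes dense: "\<forall>x y::'a. x < y \<longrightarrow> (\<exists>z. x < z \<and> z < y)" and "c < d"
  shows "infinite {c..d}"
proof
  assume f: "finite {c..d}"
  hence f2: "finite {c<..d}" by (rule finite_subset[rotated]) auto
  have ne: "{c<..d} \<noteq> {}" using assms by auto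
  let ?m = "Min {c<..d}"
  have "?m \<in> {c<..d}" using Min_in[OF f2 ne] .
  then obtain z where z: "c < z" "z < ?m" using dense by auto
  have "z \<in> {c<..d}" using z \<open>?m \<in> {c<..d}\<close> by auto
  hence "?m \<le> z" using f2 by simp
  thus False using z by simp
qed

lemma shapes_convex:
  fixes I :: "'a::linorder set"
  assumes "(\<exists>p. I = {p}) \<or> (\<exists>p q. I = {p<..<q}) \<or> (\<exists>p. I = {p<..}) \<or> (\<exists>q. I = {..<q}) \<or> I = UNIV"
  shows "convex_ord I"
  using assms unfolding convex_ord_def
  by (elim disjE exE; simp; meson order_le_less_trans order_less_le_trans)

theorem mainTheorem2:
  fixes S :: "nat \<Rightarrow> ('a::{linordered_ab_group_add, linorder_topology}) list set set"
    and h :: "'a \<Rightarrow> 'a \<Rightarrow> 'a" and a b c d :: 'a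
  assumes "o_minimal_expansion_of_ordered_group S"
    and "linear_structure S"
    and "a < b" and "c < d"
    and "definable_fun S 2 {[x, y] | x y. x \<in> {a..b} \<and> y \<in> {c..d}} (\<lambda>xs. h (xs ! 0) (xs ! 1))"
    and "continuous_on ({a..b} \<times> {c..d}) (\<lambda>(x, y). h x y)"
    and "\<forall>t \<in> {a<..<b}. strict_mono_on {c..d} (h t)"
  shows "h b d - h b c > 0"
proof -
  note om = assms(1)[unfolded o_minimal_expansion_of_ordered_group_def]
  have o1: "\<forall>n. \<forall>A\<in>S n. A \<subseteq> tuples n" using om by (elim conjE) assumption
  have o3: "\<forall>n. \<forall>A\<in>S n. tuples n - A \<in> S n" using om by (elim conjE) assumption
  have o4: "\<forall>n. \<forall>A\<in>S n. \<forall>B\<in>S n. A \<union> B \<in> S n" using om by (elim conjE) assumption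
  have o5: "\<forall>n. \<forall>A\<in>S n. {x # xs | x xs. xs \<in> A} \<in> S (Suc n)" using om by (elim conjE) assumption
  have o8: "\<forall>n. \<forall>A\<in>S (Suc n). butlast ` A \<in> S n" using om by (elim conjE) assumption
  have o9: "\<forall>x. {[x]} \<in> S 1" using om by (elim conjE) assumption
  have dense: "\<forall>x y::'a. x < y \<longrightarrow> (\<exists>z. x < z \<and> z < y)" using om by (elim conjE) assumption
  have omin: "\<forall>A\<in>S 1. \<exists>F. finite F \<and> {x. [x] \<in> A} = \<Union>F \<and>
        (\<forall>I\<in>F. (\<exists>p. I = {p}) \<or> (\<exists>p q. I = {p<..<q}) \<or> (\<exists>p. I = {p<..}) \<or>
                 (\<exists>q. I = {..<q}) \<or> I = UNIV)" using om by (elim conjE) assumption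
  define B where "B = {[x, y] | x y. x \<in> {a..b} \<and> y \<in> {c..d}}"
  define f where "f = (\<lambda>xs. h (xs ! 0) (xs ! (1::nat)))"
  obtain P where P: "finite P" "P \<subseteq> S 2" "\<Union>P = B" "\<forall>C\<in>P. affine_on C f"
  proof -
    have "\<exists>P. finite P \<and> P \<subseteq> S 2 \<and> \<Union>P = B \<and> disjoint P \<and> (\<forall>C\<in>P. affine_on C f)"
      unfolding B_def f_def using assms(2)[unfolded linear_structure_def, rule_format, OF assms(5)] .
    then show ?thesis using that by blast
  qed
  have fib: "{[t] | t. [t,y] \<in> C} \<in> S 1" if C: "C \<in> S 2" for C y
  proof -
    define L where "L = {x # xs | x xs. xs \<in> {[y]}}"
    have "{[y]} \<in> S 1" using o9 by blast
    hence "L \<in> S (Suc 1)" unfolding L_def using o5 by blast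
    hence L2: "L \<in> S 2" by (simp add: numeral_2_eq_2)
    have Lsub: "L \<subseteq> tuples 2" and Csub: "C \<subseteq> tuples 2" using o1 L2 C by blast+
    have "tuples 2 - ((tuples 2 - C) \<union> (tuples 2 - L)) \<in> S 2" using o3 o4 L2 C by blast
    moreover have "tuples 2 - ((tuples 2 - C) \<union> (tuples 2 - L)) = C \<inter> L" using Lsub Csub by blast
    ultimately have "C \<inter> L \<in> S (Suc 1)" by (simp add: numeral_2_eq_2)
    hence "butlast ` (C \<inter> L) \<in> S 1" using o8 by blast
    moreover have "butlast ` (C \<inter> L) = {[t] | t. [t,y] \<in> C}"
    proof
      show "butlast ` (C \<inter> L) \<subseteq> {[t] | t. [t,y] \<in> C}" unfolding L_def by auto
      show "{[t] | t. [t,y] \<in> C} \<subseteq> butlast ` (C \<inter> L)"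
      proof
        fix xs assume "xs \<in> {[t] | t. [t,y] \<in> C}"
        then obtain t where t: "xs = [t]" "[t,y] \<in> C" by blast
        hence "[t,y] \<in> C \<inter> L" unfolding L_def by auto
        moreover have "butlast [t,y] = xs" using t by simp
        ultimately show "xs \<in> butlast ` (C \<inter> L)" by (metis image_eqI)
      qed
    qed
    ultimately show ?thesis by simp
  qed
  have key: "\<exists>C\<in>P. \<exists>e<b. \<forall>t\<in>{e<..<b}. [t,y] \<in> C" if y: "y \<in> {c..d}" for y
  proof -
    have "\<forall>C\<in>P. \<exists>F. finite F \<and> {t. [t,y] \<in> C} = \<Union>F \<and> (\<forall>I\<in>F. convex_ord I)"
    proof
      fix C assume "C \<in> P"
      hence "{[t] | t. [t,y] \<in> C} \<in> S 1" using fib P(2) by blast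
      then have "\<exists>F. finite F \<and> {x. [x] \<in> {[t] | t. [t,y] \<in> C}} = \<Union>F \<and>
        (\<forall>I\<in>F. (\<exists>p. I = {p}) \<or> (\<exists>p q. I = {p<..<q}) \<or> (\<exists>p. I = {p<..}) \<or>
                 (\<exists>q. I = {..<q}) \<or> I = UNIV)" by (rule omin[rule_format])
      then obtain F where F: "finite F" "{x. [x] \<in> {[t] | t. [t,y] \<in> C}} = \<Union>F"
        "\<forall>I\<in>F. (\<exists>p. I = {p}) \<or> (\<exists>p q. I = {p<..<q}) \<or> (\<exists>p. I = {p<..}) \<or>
                 (\<exists>q. I = {..<q}) \<or> I = UNIV" by (elim exE conjE)
      have "{x. [x] \<in> {[t] | t. [t,y] \<in> C}} = {t. [t,y] \<in> C}" by auto
      thus "\<exists>F. finite F \<and> {t. [t,y] \<in> C} = \<Union>F \<and> (\<forall>I\<in>F. convex_ord I)"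
      proof (intro exI conjI)
        show "finite F" by (rule F(1))
        show "{t. [t,y] \<in> C} = \<Union>F" using F(2) \<open>{x. [x] \<in> {[t] | t. [t,y] \<in> C}} = {t. [t,y] \<in> C}\<close> by simp
        show "\<forall>I\<in>F. convex_ord I"
        proof
          fix I assume "I \<in> F"
          then show "convex_ord I" by (rule shapes_convex[OF F(3)[rule_format]])
        qed
      qed
    qed
    from bchoice[OF this] obtain FF where FF: "\<forall>C\<in>P. finite (FF C) \<and> {t. [t,y] \<in> C} = \<Union>(FF C) \<and> (\<forall>I\<in>FF C. convex_ord I)"
      by (elim exE)
    have cov: "{a<..<b} \<subseteq> \<Union>(\<Union>(FF ` P))"
    proof
      fix t assume "t \<in> {a<..<b}"
      hence "[t,y] \<in> B" using y unfolding B_def by auto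
      then obtain C where C: "C \<in> P" "[t,y] \<in> C" using P(3) by blast
      have e: "{t. [t,y] \<in> C} = \<Union>(FF C)" using FF[rule_format, OF C(1)] by (elim conjE)
      have "t \<in> {t. [t,y] \<in> C}" using C(2) by simp
      hence "t \<in> \<Union>(FF C)" by (simp only: e)
      thus "t \<in> \<Union>(\<Union>(FF ` P))" using C(1) by blast
    qed
    have fin: "finite (\<Union>(FF ` P))"
    proof (rule finite_Union)
      show "finite (FF ` P)" using P(1) by simp
      show "\<And>M. M \<in> FF ` P \<Longrightarrow> finite M" using FF by blast
    qed
    have cvx: "\<forall>I\<in>\<Union>(FF ` P). convex_ord I" using FF by blast
    obtain I e where I: "I \<in> \<Union>(FF ` P)" "e < b" "{e<..<b} \<subseteq> I"
      using cover_left[OF dense fin cvx assms(3) cov] by blast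
    then obtain C where C: "C \<in> P" "I \<in> FF C" by blast
    have e: "{t. [t,y] \<in> C} = \<Union>(FF C)" using FF[rule_format, OF C(1)] by (elim conjE)
    have "\<forall>t\<in>{e<..<b}. [t,y] \<in> C"
    proof
      fix t assume "t \<in> {e<..<b}"
      hence "t \<in> \<Union>(FF C)" using I(3) C(2) by blast
      hence "t \<in> {t. [t,y] \<in> C}" by (simp only: e)
      thus "[t,y] \<in> C" by simp
    qed
    thus ?thesis using C(1) I(2) by blast
  qed
  hence "\<forall>y\<in>{c..d}. \<exists>C. C \<in> P \<and> (\<exists>e<b. \<forall>t\<in>{e<..<b}. [t,y] \<in> C)" by blast
  from bchoice[OF this] obtain Cf where Cf: "\<forall>y\<in>{c..d}. Cf y \<in> P \<and> (\<exists>e<b. \<forall>t\<in>{e<..<b}. [t,y] \<in> Cf y)"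
    by (elim exE)
  have "\<not> inj_on Cf {c..d}"
  proof
    assume "inj_on Cf {c..d}"
    moreover have "finite (Cf ` {c..d})" using Cf P(1) by (meson finite_subset image_subsetI)
    ultimately show False using finite_imageD infinite_Icc_dense[OF dense assms(4)] by blast
  qed
  then obtain x1 x2 where xx: "x1 \<in> {c..d}" "x2 \<in> {c..d}" "x1 \<noteq> x2" "Cf x1 = Cf x2"
    unfolding inj_on_def by blast
  obtain y1 y2 where yy: "y1 \<in> {c..d}" "y2 \<in> {c..d}" "y1 < y2" "Cf y1 = Cf y2"
  proof (cases "x1 < x2")
    case True thus ?thesis using that xx by blast
  next
    case False hence "x2 < x1" using xx(3) by simp
    thus ?thesis using that[of x2 x1] xx by simp
  qed
  obtain e1 e2 where e1: "e1 < b" "\<forall>t\<in>{e1<..<b}. [t,y1] \<in> Cf y1"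
    and e2: "e2 < b" "\<forall>t\<in>{e2<..<b}. [t,y2] \<in> Cf y2" using Cf yy by blast
  define C where "C = Cf y1"
  define e where "e = max a (max e1 e2)"
  have eb: "e < b" "a \<le> e" using e1 e2 assms(3) unfolding e_def by auto
  have inC: "[t,y1] \<in> C \<and> [t,y2] \<in> C" if "t \<in> {e<..<b}" for t
    using that e1 e2 yy unfolding C_def e_def by auto
  have aff: "affine_on C f" using P(4) Cf yy(1) unfolding C_def by blast
  obtain t0 where t0: "e < t0" "t0 < b" using dense eb by blast
  define \<delta> where "\<delta> = h t0 y2 - h t0 y1"
  have sm: "strict_mono_on {c..d} (h t)" if "t \<in> {e<..<b}" for t
  proof -
    have "t \<in> {a<..<b}" using that eb by auto
    thus ?thesis using assms(7) by blast
  qed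
  have t0e': "t0 \<in> {e<..<b}" using t0 by simp
  have dpos: "\<delta> > 0"
    using strict_mono_onD[OF sm[OF t0e'] yy(1,2,3)] unfolding \<delta>_def by (simp add: diff_gt_0_iff_gt)
  have eq: "h t y1 + \<delta> \<le> h t y2" if t: "t \<in> {e<..<b}" for t
  proof -
    have v1: "vadd [t,y1] [0, y2-y1] = [t,y2]" by (simp add: vadd_def)
    have v0: "vadd [t0,y1] [0, y2-y1] = [t0,y2]" by (simp add: vadd_def)
    have t0e: "t0 \<in> {e<..<b}" using t0 by simp
    have "f (vadd [t,y1] [0, y2-y1]) - f [t,y1] = f (vadd [t0,y1] [0, y2-y1]) - f [t0,y1]"
      using aff[unfolded affine_on_def, rule_format, of "[t,y1]" "[t0,y1]" "[0,y2-y1]"]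
        inC[OF t] inC[OF t0e] unfolding v1 v0 by simp
    hence "h t y2 - h t y1 = h t0 y2 - h t0 y1" unfolding v1 v0 f_def by simp
    hence "h t y1 + \<delta> = h t y2" unfolding \<delta>_def by (metis add.commute diff_add_cancel)
    thus ?thesis by simp
  qed
  have cont: "continuous_on {a..b} (\<lambda>t. h t y)" if "y \<in> {c..d}" for y
  proof -
    have "continuous_on {a..b} (\<lambda>t. (t, y))" by (intro continuous_intros)
    moreover have "(\<lambda>t. (t, y)) ` {a..b} \<subseteq> {a..b} \<times> {c..d}" using that by auto
    ultimately have "continuous_on {a..b} ((\<lambda>(x, y). h x y) \<circ> (\<lambda>t. (t, y)))"
      by (rule continuous_on_compose[OF _ continuous_on_subset[OF assms(6)]])
    thus ?thesis by (simp add: o_def)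
  qed
  have cI: "c \<in> {c..d}" "d \<in> {c..d}" using assms(4) by auto
  have s1: "h b y1 + \<delta> \<le> h b y2"
    using limit_le[OF dense cont[OF yy(1)] cont[OF yy(2)] eb(2,1)] eq by blast
  have s2: "h b c + 0 \<le> h b y1"
  proof (rule limit_le[OF dense cont[OF cI(1)] cont[OF yy(1)] eb(2,1)], rule ballI)
    fix t assume t: "t \<in> {e<..<b}"
    show "h t c + 0 \<le> h t y1"
    proof (cases "y1 = c")
      case False
      hence "c < y1" using yy by auto
      thus ?thesis using strict_mono_onD[OF sm[OF t] cI(1) yy(1)] by (simp add: less_imp_le)
    qed simp
  qed
  have s3: "h b y2 + 0 \<le> h b d"
  proof (rule limit_le[OF dense cont[OF yy(2)] cont[OF cI(2)] eb(2,1)], rule ballI)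
    fix t assume t: "t \<in> {e<..<b}"
    show "h t y2 + 0 \<le> h t d"
    proof (cases "y2 = d")
      case False
      hence "y2 < d" using yy by auto
      thus ?thesis using strict_mono_onD[OF sm[OF t] yy(2) cI(2)] by (simp add: less_imp_le)
    qed simp
  qed
  have A: "h b c + \<delta> \<le> h b y1 + \<delta>" using s2 by (simp add: add_right_mono)
  have B: "h b c + \<delta> \<le> h b d" using A s1 s3 by (metis add_0_right order_trans)
  have "\<delta> \<le> h b d - h b c" using B by (simp add: le_diff_eq add.commute)
  thus ?thesis using dpos by (rule order.strict_trans2[rotated])
qed

end
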